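(* Let $\mathcal{D}$ be the class of all finite digraphs and let $D\in\mathcal{D}$. The class $\mathrm{Av}(D)=\{E\in\mathcal{D}: D\not\preceq E\}$, with respect to the homomorphic image ordering $\preceq$, is well quasi-ordered if and only if $D$ is isomorphic to the complete digraph $\overrightarrow{K}_n$ for some $n\ge1$; in that case $\mathrm{Av}(D)$ is finite.
   Context: A digraph is a set $D$ with a binary relation $E(D)\subseteq D\times D$ (loops allowed). $\overrightarrow{K}_n$ is the digraph on $\{1,\dots,n\}$ with edge set $\{(i,j):1\le i,j\le n\}$ (all ordered pairs, including loops). A homomorphism maps edges to edges. Homomorphic image ordering: $A\preceq B$ iff there is a surjective homomorphism $B\to A$. Well quasi-ordered means no infinite strictly decreasing sequence and no infinite antichain; digraphs considered up to isomorphism. *)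

theory Defs
  imports Main
begin

text \<open>A digraph is a pair (vertex set, edge relation); loops allowed.\<close>
type_synonym 'a digraph = "'a set \<times> ('a \<times> 'a) set"

definition verts :: "'a digraph \<Rightarrow> 'a set" where "verts G = fst G"
definition arcs :: "'a digraph \<Rightarrow> ('a \<times> 'a) set" where "arcs G = snd G"

definition finite_digraph :: "'a digraph \<Rightarrow> bool" where
  "finite_digraph G \<longleftrightarrow> finite (verts G) \<and> arcs G \<subseteq> verts G \<times> verts G"

definition dhom :: "('a \<Rightarrow> 'b) \<Rightarrow> 'a digraph \<Rightarrow> 'b digraph \<Rightarrow> bool" where
  "dhom f G H \<longleftrightarrow> (\<forall>x\<in>verts G. f x \<in> verts H) \<and>
     (\<forall>x y. (x, y) \<in> arcs G \<longrightarrow> (f x, f y) \<in> arcs H)"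

definition himg_le :: "'a digraph \<Rightarrow> 'b digraph \<Rightarrow> bool" where
  "himg_le A B \<longleftrightarrow> (\<exists>f. dhom f B A \<and> f ` verts B = verts A)"

definition diso :: "'a digraph \<Rightarrow> 'b digraph \<Rightarrow> bool" where
  "diso G H \<longleftrightarrow> (\<exists>f. bij_betw f (verts G) (verts H) \<and>
     (\<forall>x\<in>verts G. \<forall>y\<in>verts G. (x, y) \<in> arcs G \<longleftrightarrow> (f x, f y) \<in> arcs H))"

definition complete_digraph :: "nat \<Rightarrow> nat digraph" where
  "complete_digraph n = ({1..n}, {1..n} \<times> {1..n})"

text \<open>Every finite digraph is isomorphic to one with vertices in nat, so the class of all
  finite digraphs is represented by the finite digraphs on nat.\<close>
definition Av :: "'a digraph \<Rightarrow> nat digraph set" where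
  "Av D = {E. finite_digraph E \<and> \<not> himg_le D E}"

definition wqo_class :: "('b \<Rightarrow> 'b \<Rightarrow> bool) \<Rightarrow> 'b set \<Rightarrow> bool" where
  "wqo_class le S \<longleftrightarrow>
     \<not> (\<exists>s::nat \<Rightarrow> 'b. (\<forall>i. s i \<in> S) \<and> (\<forall>i. le (s (Suc i)) (s i) \<and> \<not> le (s i) (s (Suc i)))) \<and>
     \<not> (\<exists>s::nat \<Rightarrow> 'b. (\<forall>i. s i \<in> S) \<and> (\<forall>i j. i \<noteq> j \<longrightarrow> \<not> le (s i) (s j)))"

definition finite_upto_iso :: "nat digraph set \<Rightarrow> bool" where
  "finite_upto_iso S \<longleftrightarrow> (\<exists>F :: nat digraph set. finite F \<and> (\<forall>E\<in>S. \<exists>G\<in>F. diso E G))"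

end

theory Submission imports Defs begin

lemma himg_trans: "himg_le A B \<Longrightarrow> himg_le B C \<Longrightarrow> himg_le A C"
  unfolding himg_le_def dhom_def
  apply (elim exE conjE)
  subgoal for f g by (rule exI[of _ "f \<circ> g"]) (simp, metis image_image)
  done

lemma iso_fwd: "diso E G \<Longrightarrow> arcs E \<subseteq> verts E \<times> verts E \<Longrightarrow> himg_le G E"
proof -
  assume d: "diso E G" and a: "arcs E \<subseteq> verts E \<times> verts E"
  then obtain f where b: "bij_betw f (verts E) (verts G)" and
    e: "\<forall>x\<in>verts E. \<forall>y\<in>verts E. (x, y) \<in> arcs E \<longleftrightarrow> (f x, f y) \<in> arcs G"
    unfolding diso_def by blast
  have "dhom f E G" unfolding dhom_def
  proof (intro conjI allI impI ballI)
    fix x assume "x \<in> verts E" thus "f x \<in> verts G" using b bij_betwE by blast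
  next
    fix x y assume xy: "(x, y) \<in> arcs E"
    hence "x \<in> verts E" "y \<in> verts E" using a by auto
    thus "(f x, f y) \<in> arcs G" using e xy by simp
  qed
  moreover have "f ` verts E = verts G" using b by (simp add: bij_betw_def)
  ultimately show ?thesis unfolding himg_le_def by blast
qed

lemma iso_bwd: "diso E G \<Longrightarrow> arcs G \<subseteq> verts G \<times> verts G \<Longrightarrow> himg_le E G"
proof -
  assume d: "diso E G" and a: "arcs G \<subseteq> verts G \<times> verts G"
  then obtain f where b: "bij_betw f (verts E) (verts G)" and
    e: "\<forall>x\<in>verts E. \<forall>y\<in>verts E. (x, y) \<in> arcs E \<longleftrightarrow> (f x, f y) \<in> arcs G"
    unfolding diso_def by blast
  let ?h = "inv_into (verts E) f"
  have bh: "bij_betw ?h (verts G) (verts E)" using b by (rule bij_betw_inv_into)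
  have "dhom ?h G E"
    unfolding dhom_def
  proof (intro conjI allI impI ballI)
    fix x assume "x \<in> verts G" thus "?h x \<in> verts E" using bh bij_betwE by blast
  next
    fix x y assume xy: "(x, y) \<in> arcs G"
    hence xg: "x \<in> verts G" "y \<in> verts G" using a by auto
    hence "?h x \<in> verts E" "?h y \<in> verts E" using bh bij_betwE by blast+
    moreover have "f (?h x) = x" "f (?h y) = y"
      using bij_betw_inv_into_right[OF b xg(1)] bij_betw_inv_into_right[OF b xg(2)] by auto
    ultimately show "(?h x, ?h y) \<in> arcs E" using e xy by simp
  qed
  moreover have "?h ` verts G = verts E" using bh by (simp add: bij_betw_def)
  ultimately show ?thesis unfolding himg_le_def by blast
qed

definition Kmin :: "nat \<Rightarrow> nat digraph" where
  "Kmin n = ({0..<n}, {(i,j). i<n \<and> j<n \<and> i\<noteq>j})"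
definition Rc :: "nat \<Rightarrow> nat digraph" where
  "Rc n = ({0..<n}, {(i,j). i<n \<and> j<n \<and> j \<noteq> Suc i mod n})"

lemma Kmin_le: "himg_le (Kmin a) (Kmin b) \<Longrightarrow> a = b"
proof -
  assume "himg_le (Kmin a) (Kmin b)"
  then obtain f where h: "dhom f (Kmin b) (Kmin a)" and s: "f ` {0..<b} = {0..<a}"
    unfolding himg_le_def Kmin_def verts_def by auto
  have "inj_on f {0..<b}"
  proof (rule inj_onI, rule ccontr)
    fix u w assume u: "u \<in> {0..<b}" and w: "w \<in> {0..<b}" and e: "f u = f w" and ne: "u \<noteq> w"
    have "(u,w) \<in> arcs (Kmin b)" using u w ne by (simp add: Kmin_def arcs_def)
    hence "(f u, f w) \<in> arcs (Kmin a)" using h by (simp add: dhom_def)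
    thus False using e by (simp add: Kmin_def arcs_def)
  qed
  hence "card (f ` {0..<b}) = b" by (simp add: card_image)
  thus ?thesis using s by simp
qed

lemma suc_mod_inj: "u < (b::nat) \<Longrightarrow> w < b \<Longrightarrow> Suc u mod b = Suc w mod b \<Longrightarrow> u = w"
  by (cases "Suc u = b"; cases "Suc w = b") auto

lemma Rc_le: "himg_le (Rc a) (Rc b) \<Longrightarrow> a = b"
proof -
  assume "himg_le (Rc a) (Rc b)"
  then obtain f where h: "dhom f (Rc b) (Rc a)" and s: "f ` {0..<b} = {0..<a}"
    unfolding himg_le_def Rc_def verts_def by auto
  have ar: "\<And>x y. x < b \<Longrightarrow> y < b \<Longrightarrow> y \<noteq> Suc x mod b \<Longrightarrow> f y \<noteq> Suc (f x) mod a"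
    using h unfolding dhom_def Rc_def arcs_def by auto
  have "inj_on f {0..<b}"
  proof (rule inj_onI, rule ccontr)
    fix u w assume u: "u \<in> {0..<b}" and w: "w \<in> {0..<b}" and e: "f u = f w" and ne: "u \<noteq> w"
    have "f u \<in> {0..<a}" using s u by blast
    hence "0 < a" by simp
    hence "Suc (f u) mod a \<in> f ` {0..<b}" using s by simp
    then obtain z where z: "z < b" "f z = Suc (f u) mod a" by auto
    show False
    proof (cases "z = Suc u mod b")
      case True
      hence "z \<noteq> Suc w mod b" using suc_mod_inj u w ne by auto
      thus False using ar[of w z] z w e by auto
    next
      case False
      thus False using ar[of u z] z u by auto
    qed
  qed
  hence "card (f ` {0..<b}) = b" by (simp add: card_image)
  thus ?thesis using s by simp
qed

lemma himg_refl: "himg_le A A"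
  unfolding himg_le_def dhom_def by (rule exI[of _ id]) simp

lemma Kmin_fd: "finite_digraph (Kmin n)"
  by (auto simp: finite_digraph_def Kmin_def verts_def arcs_def)

lemma Rc_fd: "finite_digraph (Rc n)"
  by (auto simp: finite_digraph_def Rc_def verts_def arcs_def)

lemma Kmin_notle:
  assumes "verts D = {} \<or> (\<exists>x\<in>verts D. \<exists>y\<in>verts D. x \<noteq> y \<and> (x,y) \<notin> arcs D)" "0 < n"
  shows "\<not> himg_le D (Kmin n)"
proof
  assume "himg_le D (Kmin n)"
  then obtain f where h: "dhom f (Kmin n) D" and s: "f ` {0..<n} = verts D"
    unfolding himg_le_def Kmin_def verts_def by auto
  show False using assms(1)
  proof
    assume "verts D = {}" thus False using s assms(2) by auto
  next
    assume "\<exists>x\<in>verts D. \<exists>y\<in>verts D. x \<noteq> y \<and> (x,y) \<notin> arcs D"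
    then obtain x y where xy: "x \<in> verts D" "y \<in> verts D" "x \<noteq> y" "(x,y) \<notin> arcs D" by blast
    obtain u where u: "u < n" "f u = x" using xy(1) s by (metis atLeastLessThan_iff imageE)
    obtain w where w: "w < n" "f w = y" using xy(2) s by (metis atLeastLessThan_iff imageE)
    have "(u,w) \<in> arcs (Kmin n)" using u w xy(3) by (auto simp: Kmin_def arcs_def)
    hence "(f u, f w) \<in> arcs D" using h by (simp add: dhom_def)
    thus False using u w xy by simp
  qed
qed

lemma Rc_notle:
  assumes "x \<in> verts D" "(x,x) \<notin> arcs D" "2 \<le> n"
  shows "\<not> himg_le D (Rc n)"
proof
  assume "himg_le D (Rc n)"
  then obtain f where h: "dhom f (Rc n) D" and s: "f ` {0..<n} = verts D"
    unfolding himg_le_def Rc_def verts_def by auto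
  obtain u where u: "u < n" "f u = x" using assms(1) s by (metis atLeastLessThan_iff imageE)
  have "u \<noteq> Suc u mod n"
    using u(1) assms(3) by (cases "Suc u = n") auto
  hence "(u,u) \<in> arcs (Rc n)" using u by (auto simp: Rc_def arcs_def)
  hence "(f u, f u) \<in> arcs D" using h by (simp add: dhom_def)
  thus False using u assms by simp
qed

lemma not_wqo:
  fixes s :: "nat \<Rightarrow> 'b"
  assumes "\<forall>i. s i \<in> S" "\<forall>i j. i\<noteq>j \<longrightarrow> \<not> le (s i) (s j)"
  shows "\<not> wqo_class le S"
proof
  assume w: "wqo_class le S"
  have n: "\<not>(\<exists>s :: nat \<Rightarrow> 'b. (\<forall>i. s i \<in> S) \<and> (\<forall>i j. i \<noteq> j \<longrightarrow> \<not> le (s i) (s j)))"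
    using w[unfolded wqo_class_def] by (rule conjunct2)
  have "\<not> ((\<forall>i. s i \<in> S) \<and> (\<forall>i j. i \<noteq> j \<longrightarrow> \<not> le (s i) (s j)))"
    using n by (rule contrapos_nn) (rule exI)
  thus False using assms by (rule notE[OF _ conjI])
qed

lemma compl_iso:
  assumes "finite (verts D)" "verts D \<noteq> {}" "\<forall>x\<in>verts D. \<forall>y\<in>verts D. (x,y) \<in> arcs D"
  shows "\<exists>n\<ge>1. diso D (complete_digraph n)"
proof -
  let ?n = "card (verts D)"
  have "?n \<ge> 1" using assms by (simp add: Suc_le_eq card_gt_0_iff)
  have cn: "card (verts D) = card {1..?n}" by simp
  obtain f where b: "bij_betw f (verts D) {1..?n}"
    using finite_same_card_bij[OF assms(1) finite_atLeastAtMost cn] by blast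
  have "diso D (complete_digraph ?n)"
    unfolding diso_def complete_digraph_def
  proof (intro exI[of _ f] conjI ballI)
    show "bij_betw f (verts D) (verts ({1..?n}, {1..?n} \<times> {1..?n}))" using b by (simp add: verts_def)
    fix x y assume x: "x \<in> verts D" and y: "y \<in> verts D"
    have "f x \<in> {1..?n}" "f y \<in> {1..?n}" using b x y bij_betwE by blast+
    moreover have "(x, y) \<in> arcs D" using assms(3) x y by blast
    ultimately show "((x, y) \<in> arcs D) = ((f x, f y) \<in> arcs ({1..?n}, {1..?n} \<times> {1..?n}))"
      unfolding arcs_def by simp
  qed
  thus ?thesis using \<open>?n \<ge> 1\<close> by (intro exI[of _ ?n] conjI)
qed

lemma iso_compl:
  assumes "diso D (complete_digraph n)" "n \<ge> 1"
  shows "verts D \<noteq> {} \<and> card (verts D) = n \<and> (\<forall>x\<in>verts D. \<forall>y\<in>verts D. (x,y) \<in> arcs D)"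
proof -
  obtain f where b: "bij_betw f (verts D) {1..n}" and
    e: "\<forall>x\<in>verts D. \<forall>y\<in>verts D. (x, y) \<in> arcs D \<longleftrightarrow> (f x, f y) \<in> {1..n} \<times> {1..n}"
    using assms(1) unfolding diso_def complete_digraph_def verts_def arcs_def by auto
  have c: "card (verts D) = n" using bij_betw_same_card[OF b] by simp
  have "verts D \<noteq> {}" using b assms(2) unfolding bij_betw_def by auto
  moreover have "\<forall>x\<in>verts D. \<forall>y\<in>verts D. (x,y) \<in> arcs D"
    using e b unfolding bij_betw_def by auto
  ultimately show ?thesis using c by blast
qed

lemma Av_small:
  assumes "finite (verts D)" "verts D \<noteq> {}" "\<forall>x\<in>verts D. \<forall>y\<in>verts D. (x,y) \<in> arcs D"
    and E: "E \<in> Av D"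
  shows "card (verts E) < card (verts D)"
proof (rule ccontr)
  assume "\<not> ?thesis"
  hence le: "card (verts D) \<le> card (verts E)" by simp
  have fE: "finite (verts E)" and aE: "arcs E \<subseteq> verts E \<times> verts E"
    using E by (auto simp: Av_def finite_digraph_def)
  obtain g where g: "g ` verts D \<subseteq> verts E" "inj_on g (verts D)"
    using card_le_inj[OF assms(1) fE le] by blast
  obtain v0 where v0: "v0 \<in> verts D" using assms(2) by blast
  define f where "f x = (if x \<in> g ` verts D then inv_into (verts D) g x else v0)" for x
  have fv: "f x \<in> verts D" for x
    unfolding f_def using v0 by (auto intro: inv_into_into)
  have "f ` verts E = verts D"
  proof
    show "f ` verts E \<subseteq> verts D" using fv by auto
    show "verts D \<subseteq> f ` verts E"
    proof
      fix v assume v: "v \<in> verts D"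
      have "f (g v) = v" unfolding f_def using v g(2) by auto
      thus "v \<in> f ` verts E" using g(1) v by (metis image_eqI image_subset_iff)
    qed
  qed
  moreover have "dhom f E D" unfolding dhom_def using fv assms(3) by auto
  ultimately have "himg_le D E" unfolding himg_le_def by blast
  thus False using E by (simp add: Av_def)
qed

lemma iso_to_small:
  assumes "finite (verts E)" "arcs E \<subseteq> verts E \<times> verts E"
    and hb: "bij_betw h (verts E) {0..<card (verts E)}"
  shows "diso E ({0..<card (verts E)}, map_prod h h ` arcs E)"
  unfolding diso_def
proof (intro exI[of _ h] conjI ballI)
  show "bij_betw h (verts E) (verts ({0..<card (verts E)}, map_prod h h ` arcs E))"
    using hb by (simp add: verts_def)
  fix x y assume x: "x \<in> verts E" and y: "y \<in> verts E"
  have inj: "inj_on h (verts E)" using hb bij_betw_def by blast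
  show "((x, y) \<in> arcs E) = ((h x, h y) \<in> arcs ({0..<card (verts E)}, map_prod h h ` arcs E))"
  proof
    assume "(x, y) \<in> arcs E" thus "(h x, h y) \<in> arcs ({0..<card (verts E)}, map_prod h h ` arcs E)"
      by (auto simp: arcs_def)
  next
    assume "(h x, h y) \<in> arcs ({0..<card (verts E)}, map_prod h h ` arcs E)"
    then obtain a b where ab: "(a,b) \<in> arcs E" "h a = h x" "h b = h y" by (auto simp: arcs_def)
    have "a \<in> verts E" "b \<in> verts E" using ab(1) assms(2) by auto
    hence "a = x" "b = y" using ab inj x y unfolding inj_on_def by auto
    thus "(x, y) \<in> arcs E" using ab(1) by simp
  qed
qed

lemma exists_rep:
  fixes g :: "nat \<Rightarrow> 'b"
  assumes "finite F" "\<forall>i. g i \<in> F"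
  shows "\<exists>i j. i < j \<and> g i = g j"
proof -
  have "\<not> inj g"
  proof
    assume "inj g"
    have "range g \<subseteq> F" using assms by auto
    hence "finite (range g)" using assms finite_subset by blast
    hence "finite (UNIV :: nat set)" using \<open>inj g\<close> finite_imageD by blast
    thus False by simp
  qed
  then obtain i j where ij: "i \<noteq> j" "g i = g j" unfolding inj_def by blast
  show ?thesis
  proof (cases "i < j")
    case True thus ?thesis using ij by blast
  next
    case False hence "j < i" using ij by simp
    thus ?thesis using ij(2)[symmetric] by blast
  qed
qed

lemma wqo_from_finite:
  assumes F: "finite F" "\<forall>G\<in>F. arcs G \<subseteq> verts G \<times> verts G"
    and S: "\<forall>E\<in>S. arcs E \<subseteq> verts E \<times> verts E \<and> (\<exists>G\<in>F. diso E G)"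
  shows "wqo_class himg_le S"
proof -
  have key: "\<And>s :: nat \<Rightarrow> _. \<forall>i. s i \<in> S \<Longrightarrow> \<exists>i j. i < j \<and> himg_le (s i) (s j)"
  proof -
    fix s :: "nat \<Rightarrow> _" assume s: "\<forall>i. s i \<in> S"
    define g where "g i = (SOME G. G \<in> F \<and> diso (s i) G)" for i
    have g: "g i \<in> F \<and> diso (s i) (g i)" for i
    proof -
      have "\<exists>G. G \<in> F \<and> diso (s i) G" using S s by blast
      thus ?thesis unfolding g_def by (rule someI_ex)
    qed
    obtain i j where ij: "i < j" "g i = g j" using exists_rep[OF F(1)] g by blast
    have a1: "himg_le (s i) (g i)" using g[of i] F(2) by (intro iso_bwd) auto
    have a2: "himg_le (g j) (s j)" using g[of j] S s by (intro iso_fwd) auto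
    have "himg_le (s i) (s j)" using himg_trans[OF a1] a2 ij(2) by simp
    thus "\<exists>i j. i < j \<and> himg_le (s i) (s j)" using ij(1) by blast
  qed
  show ?thesis unfolding wqo_class_def
  proof (intro conjI notI)
    assume "\<exists>s :: nat \<Rightarrow> _. (\<forall>i. s i \<in> S) \<and> (\<forall>i. himg_le (s (Suc i)) (s i) \<and> \<not> himg_le (s i) (s (Suc i)))"
    then obtain s :: "nat \<Rightarrow> _" where s: "\<forall>i. s i \<in> S"
      and d: "\<forall>i. himg_le (s (Suc i)) (s i) \<and> \<not> himg_le (s i) (s (Suc i))" by blast
    obtain i j where ij: "i < j" "himg_le (s i) (s j)" using key[OF s] by blast
    have ch: "himg_le (s (Suc i + k)) (s (Suc i))" for k
    proof (induction k)
      case 0 then show ?case by (simp add: himg_refl)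
    next
      case (Suc k) then show ?case
        using himg_trans[of "s (Suc (Suc i + k))" "s (Suc i + k)" "s (Suc i)"] d by simp
    qed
    have "Suc i + (j - Suc i) = j" using ij by simp
    hence "himg_le (s j) (s (Suc i))" using ch[of "j - Suc i"] by simp
    hence "himg_le (s i) (s (Suc i))" by (rule himg_trans[OF ij(2)])
    thus False using spec[OF d, of i] by simp
  next
    assume "\<exists>s :: nat \<Rightarrow> _. (\<forall>i. s i \<in> S) \<and> (\<forall>i j. i \<noteq> j \<longrightarrow> \<not> himg_le (s i) (s j))"
    then obtain s :: "nat \<Rightarrow> _" where s: "\<forall>i. s i \<in> S" and a: "\<forall>i j. i \<noteq> j \<longrightarrow> \<not> himg_le (s i) (s j)" by blast
    obtain i j where ij: "i < j" "himg_le (s i) (s j)" using key[OF s] by blast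
    thus False using a ij(1) by (metis less_not_refl)
  qed
qed


lemma Kmin_in_Av:
  assumes "verts D = {} \<or> (\<exists>x\<in>verts D. \<exists>y\<in>verts D. x \<noteq> y \<and> (x,y) \<notin> arcs D)"
  shows "\<not> wqo_class himg_le (Av D)"
proof (rule not_wqo[of "\<lambda>i. Kmin (Suc i)"])
  show "\<forall>i. Kmin (Suc i) \<in> Av D"
    using Kmin_notle[OF assms] Kmin_fd by (simp add: Av_def)
  show "\<forall>i j. i \<noteq> j \<longrightarrow> \<not> himg_le (Kmin (Suc i)) (Kmin (Suc j))"
    using Kmin_le by fastforce
qed

lemma Rc_in_Av:
  assumes "x \<in> verts D" "(x,x) \<notin> arcs D"
  shows "\<not> wqo_class himg_le (Av D)"
proof (rule not_wqo[of "\<lambda>i. Rc (Suc (Suc i))"])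
  show "\<forall>i. Rc (Suc (Suc i)) \<in> Av D"
    using Rc_notle[OF assms] Rc_fd by (simp add: Av_def)
  show "\<forall>i j. i \<noteq> j \<longrightarrow> \<not> himg_le (Rc (Suc (Suc i))) (Rc (Suc (Suc j)))"
    using Rc_le by fastforce
qed

lemma complete_case:
  fixes D :: "nat digraph"
  assumes fin: "finite (verts D)" and ne: "verts D \<noteq> {}"
    and all: "\<forall>x\<in>verts D. \<forall>y\<in>verts D. (x,y) \<in> arcs D"
  shows "wqo_class himg_le (Av D) \<and> finite_upto_iso (Av D)"
proof -
  define N where "N = card (verts D)"
  define F :: "nat digraph set" where "F = {G. verts G \<subseteq> {0..<N} \<and> arcs G \<subseteq> verts G \<times> verts G}"
  have "F \<subseteq> Pow {0..<N} \<times> Pow ({0..<N} \<times> {0..<N})"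
    unfolding F_def verts_def arcs_def by auto
  hence fF: "finite F" by (rule finite_subset) simp
  have aF: "\<forall>G\<in>F. arcs G \<subseteq> verts G \<times> verts G" unfolding F_def by auto
  have rep: "arcs E \<subseteq> verts E \<times> verts E \<and> (\<exists>G\<in>F. diso E G)" if E: "E \<in> Av D" for E
  proof -
    have fE: "finite (verts E)" and aE: "arcs E \<subseteq> verts E \<times> verts E"
      using E by (auto simp: Av_def finite_digraph_def)
    define k where "k = card (verts E)"
    have kN: "k < N" unfolding k_def N_def using Av_small[OF fin ne all E] .
    have ck: "card (verts E) = card {0..<k}" unfolding k_def by simp
    obtain h where hb: "bij_betw h (verts E) {0..<k}"
      using finite_same_card_bij[OF fE finite_atLeastLessThan ck] by blast
    define G where "G = ({0..<k}, map_prod h h ` arcs E)"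
    have "diso E G" unfolding G_def k_def
      using iso_to_small[OF fE aE] hb unfolding k_def by blast
    moreover have "G \<in> F"
    proof -
      have "map_prod h h ` arcs E \<subseteq> {0..<k} \<times> {0..<k}"
        using aE hb bij_betwE by fastforce
      thus ?thesis unfolding F_def G_def verts_def arcs_def using kN by auto
    qed
    ultimately show ?thesis using aE by blast
  qed
  have rep': "\<forall>E\<in>Av D. arcs E \<subseteq> verts E \<times> verts E \<and> (\<exists>G\<in>F. diso E G)" using rep by blast
  have "wqo_class himg_le (Av D)" by (rule wqo_from_finite[OF fF aF rep'])
  moreover have "finite_upto_iso (Av D)" unfolding finite_upto_iso_def using fF rep by blast
  ultimately show ?thesis ..
qed

theorem theorem4p2:
  fixes D :: "nat digraph"
  assumes "finite_digraph D"
  shows "(wqo_class himg_le (Av D) \<longleftrightarrow> (\<exists>n\<ge>1. diso D (complete_digraph n)))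
       \<and> ((\<exists>n\<ge>1. diso D (complete_digraph n)) \<longrightarrow> finite_upto_iso (Av D))"
proof -
  have fin: "finite (verts D)" using assms by (simp add: finite_digraph_def)
  let ?C = "verts D \<noteq> {} \<and> (\<forall>x\<in>verts D. \<forall>y\<in>verts D. (x,y) \<in> arcs D)"
  have eq: "(\<exists>n\<ge>1. diso D (complete_digraph n)) \<longleftrightarrow> ?C"
  proof
    assume "\<exists>n\<ge>1. diso D (complete_digraph n)"
    then obtain n where "n \<ge> 1" "diso D (complete_digraph n)" by blast
    thus ?C using iso_compl by blast
  next
    assume ?C thus "\<exists>n\<ge>1. diso D (complete_digraph n)" using compl_iso[OF fin] by blast
  qed
  have notC: "\<not> wqo_class himg_le (Av D)" if nc: "\<not> ?C"
  proof (cases "verts D = {} \<or> (\<exists>x\<in>verts D. \<exists>y\<in>verts D. x \<noteq> y \<and> (x,y) \<notin> arcs D)")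
    case True thus ?thesis by (rule Kmin_in_Av)
  next
    case False
    hence ne: "verts D \<noteq> {}" by simp
    then obtain x y where xy: "x \<in> verts D" "y \<in> verts D" "(x,y) \<notin> arcs D" using nc by blast
    have "x = y" using False xy by blast
    thus ?thesis using xy(3) by (intro Rc_in_Av[OF xy(1)]) simp
  qed
  show ?thesis
  proof (cases ?C)
    case True
    hence "wqo_class himg_le (Av D) \<and> finite_upto_iso (Av D)"
      using complete_case[OF fin] by blast
    thus ?thesis using eq True by simp
  next
    case False
    hence "\<not> (\<exists>n\<ge>1. diso D (complete_digraph n))" using eq by simp
    thus ?thesis using notC[OF False] by blast
  qed
qed

end
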